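(* Let $(p_j)_{j\ge1}$, with $p_j\in[0,1]$ and $\sum_j p_j<\infty$, be regularly varying with index $\alpha\in(0,1)$ and slowly varying function $\ell$. Then for every fixed $r\ge1$, as $n\to+\infty$, $$\mathbb{E}[K_{n,r}]\simeq \frac{\alpha\,\Gamma(r-\alpha)}{r!}\,n^\alpha\ell(n),$$ where $\Gamma$ is the Gamma function and $f\simeq g$ means $f/g\to1$.
   Context: Bernoulli product feature model: observations $Y_1,Y_2,\dots$ are i.i.d., each $Y_i=(Y_{i,j})_{j\ge1}$ a sequence of independent Bernoulli$(p_j)$ random variables; $X_{n,j}=\sum_{i=1}^nY_{i,j}$, and $K_{n,r}=\sum_{j\ge1}\mathbf{1}\{X_{n,j}=r\}$. Regular variation: let $\overline{\nu}(x):=\#\{j\ge1: p_j\ge x\}$ for $x\in(0,1]$. The sequence $(p_j)$ is regularly varying with index $\alpha\in(0,1)$ if $\overline{\nu}(x)\simeq x^{-\alpha}\ell(1/x)$ as $x\downarrow0$, where $\ell$ is slowly varying, i.e. $\ell(ct)/\ell(t)\to1$ as $t\to+\infty$ for every $c>0$. *)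

theory Defs
  imports "HOL-Probability.Probability" "HOL-Library.Landau_Symbols"
begin

text \<open>The whole array \<open>(Y i j)\<close>, \<open>i,j \<in> nat\<close>,
  of independent Bernoulli variables (\<open>Y i j\<close> has parameter \<open>p j\<close>) lives on the
  infinite product space below; observation index i, feature index j.\<close>

definition feature_space :: "(nat \<Rightarrow> real) \<Rightarrow> ((nat \<times> nat) \<Rightarrow> bool) measure" where
  "feature_space p = (\<Pi>\<^sub>M ij\<in>UNIV. measure_pmf (bernoulli_pmf (p (snd ij))))"

text \<open>\<open>X n j = \<Sum>_{i=1}^n Y i j\<close> (observations indexed from 0 here).\<close>
definition Xcount :: "nat \<Rightarrow> nat \<Rightarrow> ((nat \<times> nat) \<Rightarrow> bool) \<Rightarrow> nat" where
  "Xcount n j \<omega> = card {i. i < n \<and> \<omega> (i, j)}"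

definition Kcount :: "nat \<Rightarrow> nat \<Rightarrow> ((nat \<times> nat) \<Rightarrow> bool) \<Rightarrow> nat" where
  "Kcount n r \<omega> = card {j. Xcount n j \<omega> = r}"

definition EK :: "(nat \<Rightarrow> real) \<Rightarrow> nat \<Rightarrow> nat \<Rightarrow> real" where
  "EK p n r = (\<integral>\<omega>. real (Kcount n r \<omega>) \<partial>feature_space p)"

definition nubar :: "(nat \<Rightarrow> real) \<Rightarrow> real \<Rightarrow> real" where
  "nubar p x = real (card {j. p j \<ge> x})"

definition slowly_varying :: "(real \<Rightarrow> real) \<Rightarrow> bool" where
  "slowly_varying L \<longleftrightarrow> (\<forall>c>0. ((\<lambda>t. L (c * t) / L t) \<longlongrightarrow> 1) at_top)"

definition regularly_varying :: "(nat \<Rightarrow> real) \<Rightarrow> real \<Rightarrow> (real \<Rightarrow> real) \<Rightarrow> bool" where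
  "regularly_varying p \<alpha> L \<longleftrightarrow>
     slowly_varying L \<and> (nubar p \<sim>[at_right 0] (\<lambda>x. x powr (-\<alpha>) * L (1 / x)))"

end

theory Submission
  imports Defs "HOL-Real_Asymp.Real_Asymp"
begin

definition aa :: "nat \<Rightarrow> nat \<Rightarrow> real" where
  "aa r n = real (n choose r) / real n ^ r"
definition hh :: "nat \<Rightarrow> nat \<Rightarrow> real \<Rightarrow> real" where
  "hh r n t = aa r n * (real r * t^(r-1) * (1 - t/n)^(n-r) - t^r * (real (n-r)/n) * (1 - t/n)^(n-r-1))"
definition FF :: "nat \<Rightarrow> nat \<Rightarrow> real \<Rightarrow> real" where
  "FF r n t = aa r n * t^r * (1 - t/n)^(n-r)"
definition phid :: "nat \<Rightarrow> real \<Rightarrow> real" where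
  "phid r t = (real r * t^(r-1) - t^r) * exp(-t) / fact r"

lemma aa_lim: "(\<lambda>n. aa r n) \<longlonglongrightarrow> 1 / fact r"
  unfolding aa_def
proof (rule LIMSEQ_offset[where k=r])
  have 1: "(\<lambda>m. real ((r + m) choose m) / real (m ^ r)) \<longlonglongrightarrow> 1 / fact r"
    by (rule fact_binomial_limit)
  have 2: "(\<lambda>m. (real m / real (m + r)) ^ r) \<longlonglongrightarrow> 1"
  proof -
    have "(\<lambda>m. real m / real (m + r)) \<longlonglongrightarrow> 1"
      by real_asymp
    from tendsto_power[OF this, of r] show ?thesis by simp
  qed
  have "(\<lambda>m. real ((r + m) choose m) / real (m ^ r) * (real m / real (m + r)) ^ r) \<longlonglongrightarrow> 1 / fact r * 1"
    by (intro tendsto_mult 1 2)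
  then have 3: "(\<lambda>m. real ((r + m) choose m) / real (m ^ r) * (real m / real (m + r)) ^ r) \<longlonglongrightarrow> 1 / fact r"
    by simp
  show "(\<lambda>m. real ((m + r) choose r) / real (m + r) ^ r) \<longlonglongrightarrow> 1 / fact r"
  proof (rule Lim_transform_eventually[OF 3])
    show "\<forall>\<^sub>F m in sequentially. real ((r + m) choose m) / real (m ^ r) * (real m / real (m + r)) ^ r =
       real ((m + r) choose r) / real (m + r) ^ r"
      using eventually_gt_at_top[of "0::nat"]
    proof eventually_elim
      case (elim m)
      have "(r + m) choose m = (m + r) choose r"
        by (subst binomial_symmetric[of m "r+m"]) (auto simp: add.commute)
      then show ?case using elim by (simp add: power_divide field_simps)
    qed
  qed
qed

lemma aa_le: "aa r n \<le> 1"
proof (cases "n = 0")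
  case True then show ?thesis by (cases r) (auto simp: aa_def)
next
  case False
  have "n choose r \<le> n ^ r"
  proof (cases "r \<le> n")
    case True then show ?thesis by (rule binomial_le_pow)
  next
    case False then show ?thesis by (simp add: binomial_eq_0)
  qed
  then have "real (n choose r) \<le> real (n ^ r)" by (simp only: of_nat_le_iff)
  then have "real (n choose r) \<le> real n ^ r" by simp
  then show ?thesis using False by (simp add: aa_def)
qed

lemma aa_nonneg: "aa r n \<ge> 0" by (simp add: aa_def)

lemma expk_lim: "(\<lambda>n. (1 - t / real n) ^ (n - k)) \<longlonglongrightarrow> exp (-t)"
proof -
  have 1: "(\<lambda>n. (1 + (-t) / real n) ^ n) \<longlonglongrightarrow> exp (-t)"
    by (rule tendsto_exp_limit_sequentially)
  have 2: "(\<lambda>n. (1 - t / real n) ^ k) \<longlonglongrightarrow> 1"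
  proof -
    have "(\<lambda>n. 1 - t / real n) \<longlonglongrightarrow> 1 - 0"
      by (intro tendsto_intros lim_const_over_n)
    then have "(\<lambda>n. 1 - t / real n) \<longlonglongrightarrow> 1" by simp
    from tendsto_power[OF this, of k] show ?thesis by simp
  qed
  have 1: "(\<lambda>n. (1 - t / real n) ^ n) \<longlonglongrightarrow> exp (-t)" using 1 by simp
  have 3: "(\<lambda>n. (1 - t / real n) ^ n / (1 - t / real n) ^ k) \<longlonglongrightarrow> exp (-t) / 1"
    by (intro tendsto_divide 1 2) simp
  show ?thesis
  proof (rule Lim_transform_eventually[OF 3[simplified]])
    obtain N :: nat where N: "N > \<bar>t\<bar>" using reals_Archimedean2 by blast
    show "\<forall>\<^sub>F n in sequentially. (1 - t / real n) ^ n / (1 - t / real n) ^ k = (1 - t / real n) ^ (n - k)"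
      using eventually_ge_at_top[of "max k (N+1)"]
    proof eventually_elim
      case (elim n)
      have "real n > \<bar>t\<bar>" using N elim by linarith
      then have tn: "t < real n" "real n > 0" by linarith+
      then have "t / real n < 1" by (simp add: divide_less_eq)
      then have ne: "1 - t / real n \<noteq> 0" by linarith
      have nk: "n = (n - k) + k" using elim by simp
      have eq: "(1 - t / real n) ^ n = (1 - t / real n) ^ (n - k) * (1 - t / real n) ^ k"
        using power_add[of "1 - t / real n" "n - k" k] nk by simp
      show "(1 - t / real n) ^ n / (1 - t / real n) ^ k = (1 - t / real n) ^ (n - k)"
        unfolding eq by (rule nonzero_mult_div_cancel_right[OF power_not_zero[OF ne]])
    qed
  qed
qed

lemma hh_lim: "(\<lambda>n. hh r n t) \<longlonglongrightarrow> phid r t"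
proof -
  have q: "(\<lambda>n. real (n - r) / real n) \<longlonglongrightarrow> 1"
  proof (rule Lim_transform_eventually)
    show "(\<lambda>n. 1 - real r / real n) \<longlonglongrightarrow> 1" by real_asymp
    show "\<forall>\<^sub>F n in sequentially. 1 - real r / real n = real (n - r) / real n"
      using eventually_ge_at_top[of "r+1"] by eventually_elim (auto simp: of_nat_diff field_simps)
  qed
  have "(\<lambda>n. hh r n t) \<longlonglongrightarrow> 1 / fact r * (real r * t^(r-1) * exp (-t) - t^r * 1 * exp (-t))"
    unfolding hh_def using expk_lim[of t r] expk_lim[of t "r+1"]
    by (intro tendsto_intros aa_lim q) (simp_all add: diff_diff_add)
  then show ?thesis by (simp add: phid_def field_simps)
qed

lemma FF_deriv:
  assumes "n > r"
  shows "(FF r n has_real_derivative hh r n t) (at t)"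
proof -
  have "(FF r n has_real_derivative
     aa r n * (real r * t^(r-1) * (1 - t/n)^(n-r) + t^r * (real (n-r) * (1 - t/n)^(n-r-1) * (0 - 1/n)))) (at t)"
    unfolding FF_def using assms
    by (auto intro!: derivative_eq_intros simp: algebra_simps; simp add: field_simps)
  then show ?thesis unfolding hh_def by (simp add: algebra_simps)
qed

lemma FF_np:
  assumes "n > 0"
  shows "FF r n (real n * x) = real (n choose r) * x^r * (1 - x)^(n-r)"
  using assms by (simp add: FF_def aa_def power_mult_distrib)

lemma pow_exp_bound:
  assumes "0 \<le> y" "y \<le> 1"
  shows "(1 - y) ^ m \<le> exp (- y * real m)"
proof -
  have "(1 - y) ^ m \<le> exp (-y) ^ m"
    using assms by (intro power_mono) (auto simp: exp_ge_add_one_self[of "-y", simplified])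
  also have "\<dots> = exp (- y * real m)" by (simp add: exp_of_nat_mult[symmetric] mult.commute)
  finally show ?thesis .
qed

lemma hh_bound:
  assumes "0 < t" "t \<le> real n" "real n \<ge> 2 * (real r + 1)"
  shows "\<bar>hh r n t\<bar> \<le> (real r * t^(r-1) + t^r) * exp (-t/2)"
proof -
  define y where "y = t / real n"
  have n0: "real n > 0" using assms by simp
  have y: "0 < y" "y \<le> 1" using assms n0 by (auto simp: y_def field_simps)
  have e: "(1 - y) ^ (n - r - 1) \<le> exp (-t/2)"
  proof -
    have "(1 - y) ^ (n - r - 1) \<le> exp (- y * real (n - r - 1))"
      using y by (intro pow_exp_bound) auto
    also have "\<dots> \<le> exp (-t/2)"
    proof -
      have nr: "real (n - r - 1) = real n - real r - 1" using assms by (simp add: of_nat_diff)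
      have "t * (2 + 2 * real r) \<le> t * real n" using assms by (intro mult_left_mono) auto
      then have "y * real (n - r - 1) \<ge> t / 2"
        using assms n0 by (simp add: nr y_def field_simps)
      then show ?thesis by simp
    qed
    finally show ?thesis .
  qed
  have e2: "(1 - y) ^ (n - r) \<le> (1 - y) ^ (n - r - 1)"
    using y by (intro power_decreasing) auto
  have p1: "0 \<le> (1 - y) ^ (n - r)" "0 \<le> (1 - y) ^ (n - r - 1)" using y by auto
  have qn: "0 \<le> real (n-r) / real n" "real (n-r) / real n \<le> 1" using n0 by auto
  define a where "a = real r * t^(r-1) * (1 - y)^(n-r)"
  define b where "b = t^r * (real (n-r)/n) * (1 - y)^(n-r-1)"
  have a0: "0 \<le> a" unfolding a_def using p1 assms by simp
  have b0: "0 \<le> b" unfolding b_def using p1 qn assms by simp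
  have a1: "a \<le> real r * t^(r-1) * exp (-t/2)"
  proof -
    have e3: "(1 - y) ^ (n - r) \<le> exp (-t/2)" using e e2 by linarith
    show ?thesis unfolding a_def using e3 assms by (intro mult_left_mono) auto
  qed
  have b1: "b \<le> t^r * exp (-t/2)"
  proof -
    have "b \<le> t^r * 1 * exp (-t/2)"
      unfolding b_def using e qn p1 assms by (intro mult_mono) auto
    then show ?thesis by simp
  qed
  have B: "\<bar>a - b\<bar> \<le> (real r * t^(r-1) + t^r) * exp (-t/2)"
    using a0 b0 a1 b1 by (simp add: algebra_simps abs_le_iff)
  have "\<bar>hh r n t\<bar> = aa r n * \<bar>a - b\<bar>"
    by (simp add: hh_def y_def a_def b_def abs_mult aa_nonneg)
  also have "\<dots> \<le> 1 * ((real r * t^(r-1) + t^r) * exp (-t/2))"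
    using B aa_le aa_nonneg by (intro mult_mono) auto
  finally show ?thesis by simp
qed

lemma gamma_lborel:
  fixes s :: real
  assumes "s > 0"
  shows "integrable lborel (\<lambda>t. indicator {0<..} t * t powr (s - 1) * exp (-t))"
    and "(\<integral>t. indicator {0<..} t * t powr (s - 1) * exp (-t) \<partial>lborel) = Gamma s"
proof -
  have eq: "\<And>t. indicator {0..} t * (t powr (s - 1) / exp t) = indicator {0<..} t * t powr (s - 1) * exp (-t)"
  proof -
    fix t :: real
    show "indicator {0..} t * (t powr (s - 1) / exp t) = indicator {0<..} t * t powr (s - 1) * exp (-t)"
      by (cases "t > 0"; cases "t = 0") (auto simp: indicator_def exp_minus field_simps)
  qed
  have "integral\<^sup>N lborel (\<lambda>t. ennreal (indicator {0..} t * (t powr (s - 1) / exp t))) = ennreal (Gamma s)"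
    by (rule nn_integral_has_integral_lebesgue[OF _ Gamma_integral_real[OF assms]]) simp
  then have nn: "integral\<^sup>N lborel (\<lambda>t. ennreal (indicator {0<..} t * t powr (s - 1) * exp (-t))) = ennreal (Gamma s)"
    by (simp only: eq)
  have "integrable lborel (\<lambda>t. indicator {0<..} t * t powr (s - 1) * exp (-t)) \<and>
      (\<integral>t. indicator {0<..} t * t powr (s - 1) * exp (-t) \<partial>lborel) = Gamma s"
    using assms by (subst nn_integral_eq_integrable[symmetric]) (auto simp: nn intro!: Gamma_real_pos)
  then show "integrable lborel (\<lambda>t. indicator {0<..} t * t powr (s - 1) * exp (-t))"
    and "(\<integral>t. indicator {0<..} t * t powr (s - 1) * exp (-t) \<partial>lborel) = Gamma s" by auto
qed

lemma integrable_powr_exp_half: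
  assumes "e > -1"
  shows "integrable lborel (\<lambda>t::real. indicator {0<..} t * t powr e * exp (-t/2))"
proof -
  have "integrable lborel (\<lambda>t. indicator {0<..} t * t powr ((e + 1) - 1) * exp (-t))"
    using assms by (intro gamma_lborel(1)) auto
  then have "integrable lborel (\<lambda>t. indicator {0<..} t * t powr e * exp (-t))" by simp
  from lborel_integrable_real_affine[OF this, of "1/2" 0]
  have "integrable lborel (\<lambda>x. indicator {0<..} (x/2) * (x/2) powr e * exp (-(x/2)))" by simp
  then have "integrable lborel (\<lambda>x. 2 powr e * (indicator {0<..} (x/2) * (x/2) powr e * exp (-(x/2))))"
    by (rule integrable_mult_right)
  also have "(\<lambda>x. 2 powr e * (indicator {0<..} (x/2) * (x/2) powr e * exp (-(x/2)))) =
      (\<lambda>t. indicator {0<..} t * t powr e * exp (-t/2))"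
    by (auto simp: fun_eq_iff indicator_def powr_divide)
  finally show ?thesis .
qed

lemma limit_integral:
  fixes \<alpha> :: real and r :: nat
  assumes "0 < \<alpha>" "\<alpha> < 1" "r \<ge> 1"
  defines "f \<equiv> \<lambda>t. indicator {0<..} t * ((real r * t^(r-1) - t^r) * exp(-t) / fact r) * t powr (-\<alpha>)"
  shows "integrable lborel f" "integral\<^sup>L lborel f = \<alpha> * Gamma (real r - \<alpha>) / fact r"
proof -
  define g1 where "g1 = (\<lambda>t. indicator {0<..} t * t powr ((real r - \<alpha>) - 1) * exp (-t))"
  define g2 where "g2 = (\<lambda>t. indicator {0<..} t * t powr ((real r - \<alpha> + 1) - 1) * exp (-t))"
  have i1: "integrable lborel g1" "integral\<^sup>L lborel g1 = Gamma (real r - \<alpha>)"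
    unfolding g1_def using assms gamma_lborel[of "real r - \<alpha>"] by auto
  have i2: "integrable lborel g2" "integral\<^sup>L lborel g2 = Gamma (real r - \<alpha> + 1)"
    unfolding g2_def using assms gamma_lborel[of "real r - \<alpha> + 1"] by auto
  have feq: "f = (\<lambda>t. (real r * g1 t - g2 t) / fact r)"
  proof
    fix t :: real
    show "f t = (real r * g1 t - g2 t) / fact r"
    proof (cases "t > 0")
      case True
      have a: "t^(r-1) * t powr (-\<alpha>) = t powr (real r - \<alpha> - 1)"
        using True assms by (simp add: powr_realpow[symmetric] powr_add[symmetric] of_nat_diff algebra_simps)
      have b: "t^r * t powr (-\<alpha>) = t powr (real r - \<alpha>)"
        using True assms by (simp add: powr_realpow[symmetric] powr_add[symmetric])
      have "f t = (real r * (t^(r-1) * t powr (-\<alpha>)) - t^r * t powr (-\<alpha>)) * exp (-t) / fact r"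
        using True by (simp add: f_def algebra_simps)
      also have "\<dots> = (real r * g1 t - g2 t) / fact r"
        using True by (simp only: a b) (simp add: g1_def g2_def algebra_simps)
      finally show ?thesis .
    qed (simp add: f_def g1_def g2_def)
  qed
  have "integrable lborel (\<lambda>x. real r * g1 x)" by (rule integrable_mult_right[OF i1(1)])
  from Bochner_Integration.integrable_diff[OF this i2(1)]
  show "integrable lborel f" unfolding feq by (rule integrable_divide)
  have "integral\<^sup>L lborel f = (real r * Gamma (real r - \<alpha>) - Gamma (real r - \<alpha> + 1)) / fact r"
    unfolding feq using i1 i2 by (simp add: integral_diff)
  also have "Gamma (real r - \<alpha> + 1) = (real r - \<alpha>) * Gamma (real r - \<alpha>)"
  proof (rule Gamma_plus1)
    show "real r - \<alpha> \<notin> \<int>\<^sub>\<le>\<^sub>0"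
      using assms nonpos_Ints_nonpos[of "real r - \<alpha>"] by auto
  qed
  finally show "integral\<^sup>L lborel f = \<alpha> * Gamma (real r - \<alpha>) / fact r"
    by (simp add: algebra_simps)
qed

lemma nubar_finite:
  fixes p :: "nat \<Rightarrow> real"
  assumes "summable p" "x > 0"
  shows "finite {j. x \<le> p j}"
proof -
  have "p \<longlonglongrightarrow> 0" using summable_LIMSEQ_zero[OF assms(1)] by simp
  from order_tendstoD(2)[OF this assms(2)] obtain N where "\<And>j. j \<ge> N \<Longrightarrow> p j < x"
    by (auto simp: eventually_sequentially)
  then have "{j. x \<le> p j} \<subseteq> {..<N}" by (auto simp: not_le[symmetric])
  then show ?thesis by (rule finite_subset) simp
qed

lemma nubar_anti:
  assumes "summable p" "0 < x" "x \<le> y"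
  shows "nubar p y \<le> nubar p x"
proof -
  have "{j. y \<le> p j} \<subseteq> {j. x \<le> p j}" using assms by auto
  then show ?thesis unfolding nubar_def using nubar_finite[OF assms(1,2)]
    by (simp add: card_mono)
qed

lemma nubar_nonneg: "0 \<le> nubar p x" by (simp add: nubar_def)

lemma nubar_big:
  assumes "\<And>j. p j \<le> 1" "x > 1"
  shows "nubar p x = 0"
proof -
  have "{j. x \<le> p j} = {}" using assms by (auto simp: not_le intro: le_less_trans)
  then show ?thesis by (simp add: nubar_def)
qed

lemma nubar_nonpos:
  assumes "\<And>j. 0 \<le> p j" "x \<le> 0"
  shows "nubar p x = 0"
proof -
  have "{j. x \<le> p j} = UNIV" using assms by (auto intro: order_trans)
  then show ?thesis by (simp add: nubar_def)
qed

lemma nubar_meas: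
  assumes "summable p" "\<And>j. 0 \<le> p j" "c > 0"
  shows "(\<lambda>t. nubar p (t * c)) \<in> borel_measurable borel"
proof -
  have "(\<lambda>t. - nubar p (t * c)) \<in> borel_measurable borel"
  proof (rule borel_measurable_piecewise_mono[of "{{..0}, {0<..}}"])
    show "mono_on c' (\<lambda>t. - nubar p (t * c))" if "c' \<in> {{..0}, {0<..}}" for c'
    proof (cases "c' = {..0}")
      case True
      show ?thesis unfolding True
        by (rule mono_onI) (use assms in \<open>auto simp: nubar_nonpos mult_nonpos_nonneg\<close>)
    next
      case False
      then have "c' = {0<..}" using that by auto
      then show ?thesis
        using assms(3) by (auto intro!: mono_onI nubar_anti assms(1) mult_right_mono)
    qed
  qed auto
  then have "(\<lambda>t. - (- nubar p (t * c))) \<in> borel_measurable borel"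
    by (rule borel_measurable_uminus)
  then show ?thesis by simp
qed

lemma potter:
  fixes N :: "real \<Rightarrow> real" and \<beta> x0 :: real
  assumes anti: "\<And>x y. 0 < x \<Longrightarrow> x \<le> y \<Longrightarrow> N y \<le> N x"
    and nonneg: "\<And>x. 0 \<le> N x"
    and \<beta>: "\<beta> \<ge> 0"
    and step: "\<And>x. 0 < x \<Longrightarrow> x \<le> x0 \<Longrightarrow> N (x/2) \<le> 2 powr \<beta> * N x"
    and x: "0 < x" "x \<le> x0" and s: "0 < s" "s \<le> 1"
  shows "N (s * x) \<le> 2 powr \<beta> * s powr (-\<beta>) * N x"
proof -
  have main: "\<forall>x s. 0 < x \<longrightarrow> x \<le> x0 \<longrightarrow> (1/2)^k \<le> s \<longrightarrow> s \<le> 1 \<longrightarrow>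
      N (s * x) \<le> 2 powr \<beta> * s powr (-\<beta>) * N x" for k
  proof (induction k)
    case 0
    show ?case
    proof (intro allI impI)
      fix x s :: real assume "0 < x" "x \<le> x0" "(1/2)^0 \<le> s" "s \<le> 1"
      then have "s = 1" by simp
      moreover have "1 \<le> 2 powr \<beta>" using \<beta> by (intro ge_one_powr_ge_zero) auto
      ultimately show "N (s * x) \<le> 2 powr \<beta> * s powr (-\<beta>) * N x"
        using nonneg[of x] by (simp add: mult_le_cancel_right1)
    qed
  next
    case (Suc k)
    show ?case
    proof (intro allI impI)
      fix x s :: real assume a: "0 < x" "x \<le> x0" "(1/2)^Suc k \<le> s" "s \<le> 1"
      have s0: "0 < s" using a(3) by (rule less_le_trans[rotated]) simp
      show "N (s * x) \<le> 2 powr \<beta> * s powr (-\<beta>) * N x"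
      proof (cases "s \<ge> 1/2")
        case True
        have "N (s * x) \<le> N (x / 2)" using True a by (intro anti) auto
        also have "\<dots> \<le> 2 powr \<beta> * N x" using step a by auto
        also have "\<dots> \<le> 2 powr \<beta> * s powr (-\<beta>) * N x"
        proof -
          have "s powr \<beta> \<le> 1" using s0 a(4) \<beta> by (simp add: powr_le1)
          then have "1 \<le> s powr (-\<beta>)" using s0 by (simp add: powr_minus field_simps)
          then show ?thesis using nonneg[of x]
            by (intro mult_right_mono) (auto simp: mult_le_cancel_left1)
        qed
        finally show ?thesis .
      next
        case False
        define s' where "s' = 2 * s"
        have s': "(1/2)^k \<le> s'" "s' \<le> 1" using a(3) False by (auto simp: s'_def)
        have x': "0 < x/2" "x/2 \<le> x0" using a by auto
        have "N (s * x) = N (s' * (x/2))" by (simp add: s'_def)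
        also have "\<dots> \<le> 2 powr \<beta> * s' powr (-\<beta>) * N (x/2)"
          using Suc.IH x' s' by blast
        also have "\<dots> \<le> 2 powr \<beta> * s' powr (-\<beta>) * (2 powr \<beta> * N x)"
          using step a by (intro mult_left_mono) auto
        also have "\<dots> = 2 powr \<beta> * s powr (-\<beta>) * N x"
          using s0 by (simp add: s'_def powr_mult powr_minus field_simps)
        finally show ?thesis .
      qed
    qed
  qed
  obtain k where "(1/2::real)^k < s" using real_arch_pow_inv[OF s(1), of "1/2"] by auto
  then show ?thesis using main[of k] x s by auto
qed


lemma filterlim_div2: "filterlim (\<lambda>x::real. x / 2) (at_right 0) (at_right 0)"
proof -
  have "((\<lambda>x::real. x / 2) \<longlongrightarrow> 0 / 2) (at_right 0)" by (intro tendsto_intros) simp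
  moreover have "eventually (\<lambda>x::real. x / 2 \<in> {0<..} \<and> x / 2 \<noteq> 0) (at_right 0)"
    using eventually_at_right_less[of "0::real"] by eventually_elim auto
  ultimately show ?thesis by (auto simp: filterlim_at)
qed

lemma filterlim_over_n:
  assumes "t > 0"
  shows "filterlim (\<lambda>n::nat. t / real n) (at_right 0) sequentially"
proof -
  have "(\<lambda>n::nat. t / real n) \<longlonglongrightarrow> 0" by (rule lim_const_over_n)
  moreover have "eventually (\<lambda>n::nat. t / real n \<in> {0<..} \<and> t / real n \<noteq> 0) sequentially"
    using eventually_gt_at_top[of "0::nat"] by eventually_elim (use assms in auto)
  ultimately show ?thesis by (simp add: filterlim_at)
qed

lemma filterlim_inv_right: "filterlim (\<lambda>x::real. 1 / x) at_top (at_right 0)"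
  using filterlim_inverse_at_top_right by (simp add: inverse_eq_divide)

lemma sv_nonzero:
  assumes "slowly_varying L"
  shows "eventually (\<lambda>t. L t \<noteq> 0) at_top"
proof -
  have "((\<lambda>t. L (2 * t) / L t) \<longlongrightarrow> 1) at_top" using assms unfolding slowly_varying_def by auto
  from order_tendstoD(1)[OF this, of "1/2"] have "eventually (\<lambda>t. L (2 * t) / L t > 1/2) at_top" by simp
  then show ?thesis by eventually_elim auto
qed

lemma sv_ratio:
  assumes "slowly_varying L" "c > 0" "filterlim f at_top F"
  shows "((\<lambda>x. L (c * f x) / L (f x)) \<longlongrightarrow> 1) F"
proof -
  have "((\<lambda>t. L (c * t) / L t) \<longlongrightarrow> 1) at_top" using assms unfolding slowly_varying_def by auto
  from filterlim_compose[OF this assms(3)] show ?thesis by simp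
qed

context
  fixes p :: "nat \<Rightarrow> real" and \<alpha> :: real and L :: "real \<Rightarrow> real"
  assumes rv: "regularly_varying p \<alpha> L"
begin

definition gg :: "real \<Rightarrow> real" where "gg x = x powr (-\<alpha>) * L (1 / x)"

lemma sv: "slowly_varying L" using rv by (simp add: regularly_varying_def)

lemma equiv: "nubar p \<sim>[at_right 0] gg"
  using rv by (simp add: regularly_varying_def gg_def[abs_def])

lemma rv_pos: "eventually (\<lambda>x. nubar p x > 0) (at_right 0)"
proof -
  have "eventually (\<lambda>x. L (1 / x) \<noteq> 0) (at_right 0)"
    using filterlim_iff[THEN iffD1, OF filterlim_inv_right, rule_format, OF sv_nonzero[OF sv]] .
  moreover have "eventually (\<lambda>x::real. x > 0) (at_right 0)" by (simp add: eventually_at_right_less)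
  moreover note asymp_equiv_eventually_zeros[OF equiv]
  ultimately show ?thesis
  proof eventually_elim
    case (elim x)
    then have "gg x \<noteq> 0" by (simp add: gg_def)
    with elim have "nubar p x \<noteq> 0" by simp
    with nubar_nonneg[of p x] show ?case by simp
  qed
qed

lemma rv_half: "((\<lambda>x. nubar p (x / 2) / nubar p x) \<longlongrightarrow> 2 powr \<alpha>) (at_right 0)"
proof -
  have a: "(\<lambda>x. nubar p (x/2)) \<sim>[at_right 0] (\<lambda>x. gg (x/2))"
    by (rule asymp_equiv_compose'[OF equiv filterlim_div2])
  have b: "(\<lambda>x. nubar p (x/2) / nubar p x) \<sim>[at_right 0] (\<lambda>x. gg (x/2) / gg x)"
    by (rule asymp_equiv_divide[OF a equiv])
  have c1: "((\<lambda>x. 2 powr \<alpha> * (L (2 * (1 / x)) / L (1 / x))) \<longlongrightarrow> 2 powr \<alpha> * 1) (at_right 0)"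
    by (intro tendsto_mult tendsto_const sv_ratio[OF sv _ filterlim_inv_right]) simp
  have c: "((\<lambda>x. gg (x/2) / gg x) \<longlongrightarrow> 2 powr \<alpha> * 1) (at_right 0)"
  proof (rule Lim_transform_eventually[OF c1])
    show "\<forall>\<^sub>F x in at_right 0. 2 powr \<alpha> * (L (2 * (1 / x)) / L (1 / x)) = gg (x / 2) / gg x"
      using eventually_at_right_less[of "0::real"]
    proof eventually_elim
      case (elim x)
      have "gg (x / 2) / gg x = ((x/2) powr (-\<alpha>) / x powr (-\<alpha>)) * (L (2 * (1 / x)) / L (1 / x))"
        by (simp add: gg_def)
      also have "(x/2) powr (-\<alpha>) / x powr (-\<alpha>) = 2 powr \<alpha>"
        using elim by (simp add: powr_divide powr_minus field_simps)
      finally show ?case by simp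
    qed
  qed
  show ?thesis using asymp_equiv_tendsto_transfer[OF asymp_equiv_symI[OF b] c] by (simp only: mult_1_right)
qed

lemma rv_seq:
  assumes t: "t > 0"
  shows "(\<lambda>n. nubar p (t / real n) / nubar p (1 / real n)) \<longlonglongrightarrow> t powr (-\<alpha>)"
proof -
  have a: "(\<lambda>n. nubar p (t / real n)) \<sim>[sequentially] (\<lambda>n. gg (t / real n))"
    by (rule asymp_equiv_compose'[OF equiv filterlim_over_n[OF t]])
  have a1: "(\<lambda>n. nubar p (1 / real n)) \<sim>[sequentially] (\<lambda>n. gg (1 / real n))"
    by (rule asymp_equiv_compose'[OF equiv filterlim_over_n]) simp
  have b: "(\<lambda>n. nubar p (t / real n) / nubar p (1 / real n)) \<sim>[sequentially] (\<lambda>n. gg (t / real n) / gg (1 / real n))"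
    by (rule asymp_equiv_divide[OF a a1])
  have c1: "(\<lambda>n. t powr (-\<alpha>) * (L ((1/t) * real n) / L (real n))) \<longlonglongrightarrow> t powr (-\<alpha>) * 1"
    by (intro tendsto_mult tendsto_const sv_ratio[OF sv _ filterlim_real_sequentially]) (use t in simp)
  have c: "(\<lambda>n. gg (t / real n) / gg (1 / real n)) \<longlonglongrightarrow> t powr (-\<alpha>) * 1"
  proof (rule Lim_transform_eventually[OF c1])
    show "\<forall>\<^sub>F n in sequentially. t powr (-\<alpha>) * (L ((1/t) * real n) / L (real n)) = gg (t / real n) / gg (1 / real n)"
      using eventually_gt_at_top[of "0::nat"]
    proof eventually_elim
      case (elim n)
      have "gg (t / real n) / gg (1 / real n) = ((t / real n) powr (-\<alpha>) / (1 / real n) powr (-\<alpha>)) * (L ((1/t) * real n) / L (real n))"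
        by (simp add: gg_def)
      also have "(t / real n) powr (-\<alpha>) / (1 / real n) powr (-\<alpha>) = t powr (-\<alpha>)"
        using elim t by (simp add: powr_divide powr_minus field_simps)
      finally show ?case by simp
    qed
  qed
  show ?thesis using asymp_equiv_tendsto_transfer[OF asymp_equiv_symI[OF b] c] by (simp only: mult_1_right)
qed

lemma rv_main_equiv: "(\<lambda>n. nubar p (1 / real n)) \<sim>[sequentially] (\<lambda>n. real n powr \<alpha> * L (real n))"
proof -
  have a1: "(\<lambda>n. nubar p (1 / real n)) \<sim>[sequentially] (\<lambda>n. gg (1 / real n))"
    by (rule asymp_equiv_compose'[OF equiv filterlim_over_n]) simp
  have ev: "eventually (\<lambda>n. gg (1 / real n) = real n powr \<alpha> * L (real n)) sequentially"
    using eventually_gt_at_top[of "0::nat"]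
    by eventually_elim (simp add: gg_def powr_divide powr_minus)
  show ?thesis using asymp_equiv_transfer[OF a1 _ ev] by simp
qed

lemma rv_seq_pos: "eventually (\<lambda>n. nubar p (1 / real n) > 0) sequentially"
  using filterlim_iff[THEN iffD1, OF filterlim_over_n[of 1, OF zero_less_one], rule_format, OF rv_pos] by simp

end

lemma hh_cont: "n > 0 \<Longrightarrow> isCont (hh r n) t"
  unfolding hh_def by (intro continuous_intros) auto

lemma hh_meas: "n > 0 \<Longrightarrow> hh r n \<in> borel_measurable borel"
  by (rule borel_measurable_continuous_onI) (simp add: continuous_at_imp_continuous_on hh_cont)

lemma nubar_meas':
  assumes "summable p" "\<And>j. 0 \<le> p j" "n > 0"
  shows "(\<lambda>t. nubar p (t / real n)) \<in> borel_measurable borel"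
  using nubar_meas[OF assms(1,2), of "1 / real n"] assms(3) by simp

lemma abel:
  fixes p :: "nat \<Rightarrow> real"
  assumes p01: "\<And>j. 0 \<le> p j \<and> p j \<le> 1" and sp: "summable p" and r: "r \<ge> 1" and nr: "n > r"
  shows "(\<lambda>j. real (n choose r) * p j ^ r * (1 - p j)^(n-r)) sums
           (\<integral>t. indicator {0<..} t * hh r n t * nubar p (t / real n) \<partial>lborel)"
proof -
  have n0: "n > 0" "real n > 0" using nr by auto
  define f where "f j t = hh r n t * indicator {0 .. real n * p j} t" for j t
  have FF0: "FF r n 0 = 0" using r by (simp add: FF_def)
  have hasint: "has_bochner_integral lborel (f j) (real (n choose r) * p j ^ r * (1 - p j)^(n-r))" for j
  proof -
    have "has_bochner_integral lborel (\<lambda>x. hh r n x * indicator {0 .. real n * p j} x)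
            (FF r n (real n * p j) - FF r n 0)"
      using p01[of j] n0 by (intro has_bochner_integral_FTC_Icc_real FF_deriv nr hh_cont n0) auto
    then show ?thesis unfolding f_def FF0 FF_np[OF n0(1)] by simp
  qed
  have intf: "integrable lborel (f j)" for j using hasint by (auto simp: has_bochner_integral_iff)
  have intf_eq: "integral\<^sup>L lborel (f j) = real (n choose r) * p j ^ r * (1 - p j)^(n-r)" for j
    using hasint by (auto simp: has_bochner_integral_iff)
  obtain B where B: "\<And>t. t \<in> {0..real n} \<Longrightarrow> \<bar>hh r n t\<bar> \<le> B"
  proof -
    have "compact (hh r n ` {0..real n})"
      by (intro compact_continuous_image continuous_at_imp_continuous_on ballI hh_cont n0) simp
    then have "bounded (hh r n ` {0..real n})" by (rule compact_imp_bounded)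
    then obtain B where B': "\<forall>x\<in>hh r n ` {0..real n}. norm x \<le> B" by (auto simp: bounded_iff)
    show ?thesis
    proof (rule that)
      fix t assume "t \<in> {0..real n}"
      then show "\<bar>hh r n t\<bar> \<le> B" using B' by auto
    qed
  qed
  have normint: "(\<integral>t. norm (f j t) \<partial>lborel) \<le> B * (real n * p j)" for j
  proof -
    have "(\<integral>t. norm (f j t) \<partial>lborel) \<le> (\<integral>t. B * indicator {0 .. real n * p j} t \<partial>lborel)"
    proof (rule integral_mono)
      show "integrable lborel (\<lambda>t. norm (f j t))" using intf by simp
      show "integrable lborel (\<lambda>t. B * indicator {0 .. real n * p j} t)"
        using borel_integrable_atLeastAtMost[of 0 "real n * p j" "\<lambda>_. B"] by simp
      fix t
      show "norm (f j t) \<le> B * indicator {0 .. real n * p j} t"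
      proof (cases "t \<in> {0 .. real n * p j}")
        case True
        then have "t \<in> {0..real n}" using p01[of j] n0
          by (auto intro: order_trans[OF _ mult_left_le[of "p j" "real n"]])
        then show ?thesis using True B by (simp add: f_def)
      qed (simp add: f_def)
    qed
    also have "(\<integral>t. B * indicator {0 .. real n * p j} t \<partial>lborel) = B * (real n * p j) - B * 0"
      using p01[of j] n0
      by (intro integral_FTC_Icc_real[of 0 "real n * p j" "\<lambda>x. B * x" "\<lambda>_. B"])
         (auto intro!: derivative_eq_intros)
    finally show ?thesis by simp
  qed
  have summ_norm: "summable (\<lambda>j. \<integral>t. norm (f j t) \<partial>lborel)"
  proof (rule summable_comparison_test'[where N=0])
    show "summable (\<lambda>j. B * (real n * p j))" by (intro summable_mult sp)
    show "norm (\<integral>t. norm (f j t) \<partial>lborel) \<le> B * (real n * p j)" for j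
      using normint[of j] by (simp add: integral_nonneg_AE)
  qed
  have pt: "summable (\<lambda>j. norm (f j t)) \<and> (\<Sum>j. f j t) = indicator {0<..} t * hh r n t * nubar p (t / real n)"
    if t: "t \<noteq> 0" for t
  proof (cases "t > 0")
    case True
    define A where "A = {j. t / real n \<le> p j}"
    have finA: "finite A" unfolding A_def using True n0 by (intro nubar_finite sp) auto
    have fz: "f j t = (if j \<in> A then hh r n t else 0)" for j
      using True n0 by (auto simp: f_def A_def indicator_def field_simps)
    have "summable (\<lambda>j. norm (f j t))" by (rule summable_finite[OF finA]) (simp add: fz)
    moreover have "(\<Sum>j. f j t) = (\<Sum>j\<in>A. f j t)" by (rule suminf_finite[OF finA]) (simp add: fz)
    moreover have "(\<Sum>j\<in>A. f j t) = hh r n t * nubar p (t / real n)"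
      by (simp add: fz nubar_def A_def)
    ultimately show ?thesis using True by simp
  next
    case False
    then have "t < 0" using t by simp
    then have fz: "f j t = 0" for j using p01[of j] n0 by (simp add: f_def)
    then show ?thesis using False by simp
  qed
  have ae: "AE t in lborel. summable (\<lambda>j. norm (f j t))"
    using AE_lborel_singleton[of 0] by eventually_elim (use pt in auto)
  have S: "(\<lambda>j. integral\<^sup>L lborel (f j)) sums (\<integral>t. (\<Sum>j. f j t) \<partial>lborel)"
    by (rule sums_integral[OF intf ae summ_norm])
  have I: "integrable lborel (\<lambda>t. \<Sum>j. f j t)"
    by (rule integrable_suminf[OF intf ae summ_norm])
  have "(\<integral>t. (\<Sum>j. f j t) \<partial>lborel) = (\<integral>t. indicator {0<..} t * hh r n t * nubar p (t / real n) \<partial>lborel)"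
  proof (rule integral_cong_AE)
    show "(\<lambda>t. \<Sum>j. f j t) \<in> borel_measurable lborel" using I by (rule borel_measurable_integrable)
    have m1: "(\<lambda>t. nubar p (t / real n)) \<in> borel_measurable borel"
      using nubar_meas'[OF sp _ n0(1)] p01 by auto
    have m2: "hh r n \<in> borel_measurable borel" by (rule hh_meas[OF n0(1)])
    show "(\<lambda>t. indicator {0<..} t * hh r n t * nubar p (t / real n)) \<in> borel_measurable lborel"
      using m1 m2 by simp
    show "AE t in lborel. (\<Sum>j. f j t) = indicator {0<..} t * hh r n t * nubar p (t / real n)"
      using AE_lborel_singleton[of 0] by eventually_elim (use pt in auto)
  qed
  with S show ?thesis by (simp add: intf_eq)
qed

lemma w_eq:
  fixes t \<beta> :: real and r :: nat
  assumes "t > 0" "r \<ge> 1"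
  shows "(real r * t^(r-1) + t^r) * exp (-t/2) * (1 + 2 powr \<beta> * t powr (-\<beta>)) =
    real r * (t powr (real r - 1) * exp (-t/2)) + t powr real r * exp (-t/2)
    + 2 powr \<beta> * real r * (t powr (real r - 1 - \<beta>) * exp (-t/2))
    + 2 powr \<beta> * (t powr (real r - \<beta>) * exp (-t/2))"
proof -
  have a: "t^(r-1) = t powr (real r - 1)" using assms by (simp add: powr_realpow[symmetric] of_nat_diff)
  have b: "t^r = t powr real r" using assms by (simp add: powr_realpow)
  have c: "t powr (real r - 1) * t powr (-\<beta>) = t powr (real r - 1 - \<beta>)"
    using assms by (simp add: powr_add[symmetric])
  have d: "t powr real r * t powr (-\<beta>) = t powr (real r - \<beta>)"
    using assms by (simp add: powr_add[symmetric])
  have "(real r * t^(r-1) + t^r) * exp (-t/2) * (1 + 2 powr \<beta> * t powr (-\<beta>)) =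
    real r * (t powr (real r - 1) * exp (-t/2)) + t powr real r * exp (-t/2)
    + 2 powr \<beta> * real r * ((t powr (real r - 1) * t powr (-\<beta>)) * exp (-t/2))
    + 2 powr \<beta> * ((t powr real r * t powr (-\<beta>)) * exp (-t/2))"
    unfolding a b by (simp add: algebra_simps)
  also have "\<dots> = real r * (t powr (real r - 1) * exp (-t/2)) + t powr real r * exp (-t/2)
    + 2 powr \<beta> * real r * (t powr (real r - 1 - \<beta>) * exp (-t/2))
    + 2 powr \<beta> * (t powr (real r - \<beta>) * exp (-t/2))"
    by (simp only: c d)
  finally show ?thesis .
qed

lemma main_limit:
  fixes p :: "nat \<Rightarrow> real" and \<alpha> :: real and L :: "real \<Rightarrow> real" and r :: nat
  assumes p01: "\<And>j. 0 \<le> p j \<and> p j \<le> 1" and sp: "summable p"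
    and \<alpha>: "0 < \<alpha>" "\<alpha> < 1" and rv: "regularly_varying p \<alpha> L" and r: "r \<ge> 1"
  shows "(\<lambda>n. (\<integral>t. indicator {0<..} t * hh r n t * nubar p (t / real n) \<partial>lborel) / nubar p (1 / real n))
           \<longlonglongrightarrow> \<alpha> * Gamma (real r - \<alpha>) / fact r"
proof -
  define N where "N = nubar p"
  define \<beta> where "\<beta> = (1 + \<alpha>) / 2"
  have \<beta>: "0 \<le> \<beta>" "\<beta> < 1" "\<alpha> < \<beta>" using \<alpha> by (auto simp: \<beta>_def)
  have anti: "\<And>x y. 0 < x \<Longrightarrow> x \<le> y \<Longrightarrow> N y \<le> N x" unfolding N_def by (rule nubar_anti[OF sp])
  have nonneg: "\<And>x. 0 \<le> N x" unfolding N_def by (rule nubar_nonneg)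
  have "2 powr \<alpha> < 2 powr \<beta>" using \<beta> by (intro powr_less_mono) auto
  from order_tendstoD(2)[OF rv_half[OF rv] this]
  have "eventually (\<lambda>x. N (x/2) / N x < 2 powr \<beta>) (at_right 0)" by (simp add: N_def)
  moreover have "eventually (\<lambda>x. N x > 0) (at_right 0)" unfolding N_def by (rule rv_pos[OF rv])
  ultimately have "eventually (\<lambda>x. N (x/2) \<le> 2 powr \<beta> * N x) (at_right 0)"
    by eventually_elim (simp add: divide_less_eq)
  then obtain x1 where x1: "x1 > 0" "\<And>y. y > 0 \<Longrightarrow> y < x1 \<Longrightarrow> N (y/2) \<le> 2 powr \<beta> * N y"
    by (auto simp: eventually_at_right_field)
  define x0 where "x0 = x1 / 2"
  have x0: "x0 > 0" "\<And>y. y > 0 \<Longrightarrow> y \<le> x0 \<Longrightarrow> N (y/2) \<le> 2 powr \<beta> * N y"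
    using x1 by (auto simp: x0_def)
  have pot: "N (s * x) \<le> 2 powr \<beta> * s powr (-\<beta>) * N x" if "0 < x" "x \<le> x0" "0 < s" "s \<le> 1" for s x
    using potter[where N=N, OF anti nonneg \<beta>(1) x0(2)] that by blast
  have ev: "eventually (\<lambda>n. n > r \<and> real n \<ge> 2 * (real r + 1) \<and> 1 / real n \<le> x0 \<and> N (1 / real n) > 0) sequentially"
  proof -
    have e1: "eventually (\<lambda>n. n > r) sequentially" by (rule eventually_gt_at_top)
    have e2: "eventually (\<lambda>n. real n \<ge> 2 * (real r + 1)) sequentially" by real_asymp
    have e3: "eventually (\<lambda>n. 1 / real n \<le> x0) sequentially"
    proof -
      have "(\<lambda>n. 1 / real n) \<longlonglongrightarrow> 0" by (rule lim_const_over_n)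
      from order_tendstoD(2)[OF this x0(1)] show ?thesis by eventually_elim simp
    qed
    have e4: "eventually (\<lambda>n. N (1 / real n) > 0) sequentially" unfolding N_def by (rule rv_seq_pos[OF rv])
    show ?thesis using e1 e2 e3 e4 by eventually_elim auto
  qed
  then obtain N0 where N0: "\<And>n. n \<ge> N0 \<Longrightarrow> n > r \<and> real n \<ge> 2 * (real r + 1) \<and> 1 / real n \<le> x0 \<and> N (1 / real n) > 0"
    by (auto simp: eventually_sequentially)
  define S where "S n t = indicator {0<..} t * hh r n t * (N (t / real n) / N (1 / real n))" for n t
  define W where "W e t = indicator {0<..} t * t powr e * exp (-t/2)" for e t :: real
  define w where "w t = real r * W (real r - 1) t + W (real r) t + 2 powr \<beta> * real r * W (real r - 1 - \<beta>) t
      + 2 powr \<beta> * W (real r - \<beta>) t" for t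
  define f where "f t = indicator {0<..} t * ((real r * t^(r-1) - t^r) * exp(-t) / fact r) * t powr (-\<alpha>)" for t :: real
  have fint: "integrable lborel f" "integral\<^sup>L lborel f = \<alpha> * Gamma (real r - \<alpha>) / fact r"
    using limit_integral[OF \<alpha> r] unfolding f_def by auto
  have Wint: "e > -1 \<Longrightarrow> integrable lborel (W e)" for e
    unfolding W_def[abs_def] by (rule integrable_powr_exp_half)
  have wint: "integrable lborel w"
    unfolding w_def[abs_def] using \<beta> r
    by (intro Bochner_Integration.integrable_add integrable_mult_right Wint) auto
  have w_pos: "w t = (real r * t^(r-1) + t^r) * exp (-t/2) * (1 + 2 powr \<beta> * t powr (-\<beta>))" if "t > 0" for t
    using that w_eq[OF that r, of \<beta>] by (simp add: w_def W_def)
  have bound: "norm (S (i + N0) t) \<le> w t" for i t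
  proof (cases "t > 0")
    case False
    then show ?thesis by (simp add: S_def w_def W_def)
  next
    case t: True
    define n where "n = i + N0"
    have n: "n > r" "real n \<ge> 2 * (real r + 1)" "1 / real n \<le> x0" "N (1 / real n) > 0"
      using N0[of n] by (auto simp: n_def)
    have npos: "real n > 0" using n by simp
    have wge: "0 \<le> w t" using t by (simp add: w_pos)
    show ?thesis
    proof (cases "t \<le> real n")
      case False
      then have "t / real n > 1" using npos by (simp add: field_simps)
      then have "N (t / real n) = 0" unfolding N_def using p01 by (intro nubar_big) auto
      then show ?thesis using wge by (simp add: S_def n_def[symmetric])
    next
      case tn: True
      have hb: "\<bar>hh r n t\<bar> \<le> (real r * t^(r-1) + t^r) * exp (-t/2)"
        by (rule hh_bound[OF t tn n(2)])
      have R0: "0 \<le> N (t / real n) / N (1 / real n)" using nonneg by simp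
      have R: "N (t / real n) / N (1 / real n) \<le> 1 + 2 powr \<beta> * t powr (-\<beta>)"
      proof (cases "t \<ge> 1")
        case True
        have "N (t / real n) \<le> N (1 / real n)" using True npos by (intro anti) (auto simp: divide_right_mono)
        then have "N (t / real n) / N (1 / real n) \<le> 1" using n(4) by simp
        moreover have "0 \<le> 2 powr \<beta> * t powr (-\<beta>)" by simp
        ultimately show ?thesis by linarith
      next
        case False
        have "N (t * (1 / real n)) \<le> 2 powr \<beta> * t powr (-\<beta>) * N (1 / real n)"
          using False t npos n(3) by (intro pot) auto
        then have "N (t / real n) / N (1 / real n) \<le> 2 powr \<beta> * t powr (-\<beta>)"
          using n(4) by (simp add: divide_le_eq)
        then show ?thesis by linarith
      qed
      have "norm (S n t) = \<bar>hh r n t\<bar> * (N (t / real n) / N (1 / real n))"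
        using t R0 nonneg[of "t / real n"] nonneg[of "1 / real n"] by (simp add: S_def abs_mult)
      also have "\<dots> \<le> ((real r * t^(r-1) + t^r) * exp (-t/2)) * (1 + 2 powr \<beta> * t powr (-\<beta>))"
        using hb R R0 by (intro mult_mono) auto
      also have "\<dots> = w t" using w_pos[OF t] by simp
      finally show ?thesis by (simp add: n_def)
    qed
  qed
  have lim: "(\<lambda>i. S (i + N0) t) \<longlonglongrightarrow> f t" for t
  proof (cases "t > 0")
    case False
    then show ?thesis by (simp add: S_def f_def)
  next
    case True
    have h: "(\<lambda>i. hh r (i + N0) t) \<longlonglongrightarrow> phid r t"
      using LIMSEQ_ignore_initial_segment[OF hh_lim] .
    have q: "(\<lambda>i. N (t / real (i + N0)) / N (1 / real (i + N0))) \<longlonglongrightarrow> t powr (-\<alpha>)"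
      using LIMSEQ_ignore_initial_segment[OF rv_seq[OF rv True]] unfolding N_def .
    have "(\<lambda>i. indicator {0<..} t * hh r (i + N0) t * (N (t / real (i + N0)) / N (1 / real (i + N0))))
         \<longlonglongrightarrow> indicator {0<..} t * phid r t * t powr (-\<alpha>)"
      by (intro tendsto_mult tendsto_const h q)
    then show ?thesis by (simp add: S_def f_def phid_def)
  qed
  have Smeas: "S (i + N0) \<in> borel_measurable lborel" for i
  proof -
    have np: "i + N0 > 0" using N0[of "i + N0"] by auto
    have m1: "(\<lambda>t. nubar p (t / real (i + N0))) \<in> borel_measurable borel"
      using nubar_meas'[OF sp _ np] p01 by auto
    have m2: "hh r (i + N0) \<in> borel_measurable borel" by (rule hh_meas[OF np])
    show ?thesis using m1 m2 unfolding S_def[abs_def] N_def by simp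
  qed
  have "(\<lambda>i. integral\<^sup>L lborel (S (i + N0))) \<longlonglongrightarrow> integral\<^sup>L lborel f"
    by (rule integral_dominated_convergence[OF borel_measurable_integrable[OF fint(1)] Smeas wint])
       (auto intro!: AE_I2 simp: lim bound[unfolded real_norm_def])
  then have "(\<lambda>n. integral\<^sup>L lborel (S n)) \<longlonglongrightarrow> \<alpha> * Gamma (real r - \<alpha>) / fact r"
    unfolding fint(2) by (rule LIMSEQ_offset)
  moreover have "integral\<^sup>L lborel (S n) =
      (\<integral>t. indicator {0<..} t * hh r n t * nubar p (t / real n) \<partial>lborel) / nubar p (1 / real n)" for n
  proof -
    have "S n = (\<lambda>t. indicator {0<..} t * hh r n t * nubar p (t / real n) / nubar p (1 / real n))"
      by (simp add: S_def[abs_def] N_def)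
    then show ?thesis by simp
  qed
  ultimately show ?thesis by simp
qed

definition Mf :: "(nat \<Rightarrow> real) \<Rightarrow> nat \<times> nat \<Rightarrow> bool measure" where
  "Mf p = (\<lambda>ij. measure_pmf (bernoulli_pmf (p (snd ij))))"

lemma fs_eq: "feature_space p = PiM UNIV (Mf p)"
  by (simp add: feature_space_def Mf_def)

lemma space_fs: "space (feature_space p) = UNIV"
  by (auto simp: fs_eq space_PiM Mf_def PiE_def Pi_def extensional_def)

lemma sets_fs_UNIV: "sets (Mf p k) = UNIV"
  by (simp add: Mf_def)

lemma prob_space_fs: "prob_space (feature_space p)"
  unfolding fs_eq by (rule prob_space_PiM) (simp add: Mf_def prob_space_measure_pmf)

lemma prod_if_count:
  assumes "S \<subseteq> {..<n}"
  shows "(\<Prod>i<n. if i \<in> S then a else b) = a ^ card S * (b::real) ^ (n - card S)"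
proof -
  have "(\<Prod>i<n. if i \<in> S then a else b) = (\<Prod>i\<in>{..<n} \<inter> {i. i \<in> S}. a) * (\<Prod>i\<in>{..<n} \<inter> - {i. i \<in> S}. b)"
    by (rule prod.If_cases) simp
  moreover have "{..<n} \<inter> {i. i \<in> S} = S" using assms by auto
  moreover have "{..<n} \<inter> - {i. i \<in> S} = {..<n} - S" by auto
  moreover have "card ({..<n} - S) = n - card S"
    using assms by (simp add: card_Diff_subset finite_subset)
  ultimately show ?thesis by simp
qed

lemma prob_X:
  fixes p :: "nat \<Rightarrow> real"
  assumes p01: "\<And>j. 0 \<le> p j \<and> p j \<le> 1"
  shows "{\<omega>. Xcount n j \<omega> = r} \<in> sets (feature_space p)"
    and "emeasure (feature_space p) {\<omega>. Xcount n j \<omega> = r} = ennreal (real (n choose r) * p j ^ r * (1 - p j) ^ (n - r))"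
proof -
  define J where "J = {..<n} \<times> {j}"
  define SS where "SS = {S. S \<subseteq> {..<n} \<and> card S = r}"
  define B where "B S = prod_emb UNIV (Mf p) J (PiE J (\<lambda>k. {fst k \<in> S}))" for S
  have finJ: "finite J" by (simp add: J_def)
  have finSS: "finite SS" unfolding SS_def by (rule finite_subset[of _ "Pow {..<n}"]) auto
  have memB: "\<omega> \<in> B S \<longleftrightarrow> (\<forall>i<n. \<omega> (i, j) = (i \<in> S))" for \<omega> S
    by (auto simp: B_def prod_emb_def space_PiM Mf_def J_def PiE_def Pi_def extensional_def restrict_def)
  have Bsets: "B S \<in> sets (PiM UNIV (Mf p))" for S
    unfolding B_def by (rule sets_PiM_I) (auto simp: finJ sets_fs_UNIV)
  have Aeq: "{\<omega>. Xcount n j \<omega> = r} = (\<Union>S\<in>SS. B S)"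
  proof (intro set_eqI iffI)
    fix \<omega> assume "\<omega> \<in> {\<omega>. Xcount n j \<omega> = r}"
    then have c: "card {i. i < n \<and> \<omega> (i, j)} = r" by (simp add: Xcount_def)
    let ?S = "{i. i < n \<and> \<omega> (i, j)}"
    have "?S \<in> SS" using c by (auto simp: SS_def)
    moreover have "\<omega> \<in> B ?S" by (auto simp: memB)
    ultimately show "\<omega> \<in> (\<Union>S\<in>SS. B S)" by blast
  next
    fix \<omega> assume "\<omega> \<in> (\<Union>S\<in>SS. B S)"
    then obtain S where S: "S \<in> SS" "\<omega> \<in> B S" by blast
    then have "{i. i < n \<and> \<omega> (i, j)} = S" by (auto simp: memB SS_def)
    then show "\<omega> \<in> {\<omega>. Xcount n j \<omega> = r}" using S by (simp add: Xcount_def SS_def)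
  qed
  have disj: "disjoint_family_on B SS"
    unfolding disjoint_family_on_def
  proof (intro ballI impI)
    fix S S' assume a: "S \<in> SS" "S' \<in> SS" "S \<noteq> S'"
    show "B S \<inter> B S' = {}"
    proof (rule ccontr)
      assume "B S \<inter> B S' \<noteq> {}"
      then obtain \<omega> where "\<omega> \<in> B S" "\<omega> \<in> B S'" by blast
      then have "\<forall>i<n. (i \<in> S) = (i \<in> S')" by (auto simp: memB)
      moreover have "S \<subseteq> {..<n}" "S' \<subseteq> {..<n}" using a by (auto simp: SS_def)
      ultimately have "S = S'" by blast
      with a show False by simp
    qed
  qed
  show "{\<omega>. Xcount n j \<omega> = r} \<in> sets (feature_space p)"
    unfolding Aeq fs_eq using Bsets finSS by (intro sets.finite_UN) auto
  have pj: "0 \<le> p j" "p j \<le> 1" using p01 by auto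
  have emB: "emeasure (PiM UNIV (Mf p)) (B S) = ennreal (p j ^ r * (1 - p j) ^ (n - r))" if S: "S \<in> SS" for S
  proof -
    have "emeasure (PiM UNIV (Mf p)) (B S) = (\<Prod>k\<in>J. emeasure (Mf p k) {fst k \<in> S})"
      unfolding B_def by (rule emeasure_PiM_emb) (auto simp: Mf_def prob_space_measure_pmf finJ)
    also have "\<dots> = (\<Prod>k\<in>J. ennreal (if fst k \<in> S then p j else 1 - p j))"
      using pj by (intro prod.cong refl) (auto simp: Mf_def J_def emeasure_pmf_single)
    also have "\<dots> = ennreal (\<Prod>k\<in>J. if fst k \<in> S then p j else 1 - p j)"
      using pj by (intro prod_ennreal) auto
    also have "(\<Prod>k\<in>J. if fst k \<in> S then p j else 1 - p j) = (\<Prod>i<n. if i \<in> S then p j else 1 - p j)"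
    proof -
      have "J = (\<lambda>i. (i, j)) ` {..<n}" by (auto simp: J_def)
      moreover have "inj_on (\<lambda>i. (i, j)) {..<n}" by (auto simp: inj_on_def)
      ultimately show ?thesis by (simp add: prod.reindex)
    qed
    also have "\<dots> = p j ^ r * (1 - p j) ^ (n - r)"
      using S by (simp add: SS_def prod_if_count)
    finally show ?thesis .
  qed
  have "emeasure (feature_space p) {\<omega>. Xcount n j \<omega> = r} = (\<Sum>S\<in>SS. emeasure (PiM UNIV (Mf p)) (B S))"
    unfolding Aeq fs_eq using Bsets disj finSS by (intro sum_emeasure[symmetric]) auto
  also have "\<dots> = (\<Sum>S\<in>SS. ennreal (p j ^ r * (1 - p j) ^ (n - r)))"
    using emB by (intro sum.cong) auto
  also have "\<dots> = ennreal (\<Sum>S\<in>SS. p j ^ r * (1 - p j) ^ (n - r))"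
    using pj by (intro sum_ennreal) auto
  also have "(\<Sum>S\<in>SS. p j ^ r * (1 - p j) ^ (n - r)) = real (n choose r) * p j ^ r * (1 - p j) ^ (n - r)"
  proof -
    have "card SS = n choose r" unfolding SS_def using n_subsets[of "{..<n}" r] by simp
    then show ?thesis by simp
  qed
  finally show "emeasure (feature_space p) {\<omega>. Xcount n j \<omega> = r} = ennreal (real (n choose r) * p j ^ r * (1 - p j) ^ (n - r))" .
qed

lemma suminf_indicator_card:
  fixes S :: "nat set"
  shows "(\<Sum>i. indicator S i :: ennreal) = (if finite S then of_nat (card S) else \<infinity>)"
proof -
  have "(\<Sum>i. indicator S i :: ennreal) = (\<integral>\<^sup>+i. indicator S i \<partial>count_space UNIV)"
    by (rule nn_integral_count_space_nat[symmetric])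
  also have "\<dots> = emeasure (count_space UNIV) S" by simp
  also have "\<dots> = (if finite S then of_nat (card S) else \<infinity>)" by (rule emeasure_count_space) simp
  finally show ?thesis .
qed

lemma EK_sums:
  fixes p :: "nat \<Rightarrow> real"
  assumes p01: "\<And>j. 0 \<le> p j \<and> p j \<le> 1" and sp: "summable p" and r: "r \<ge> 1"
  shows "(\<lambda>j. real (n choose r) * p j ^ r * (1 - p j)^(n-r)) sums EK p n r"
proof -
  define M where "M = feature_space p"
  define b where "b j = real (n choose r) * p j ^ r * (1 - p j)^(n-r)" for j
  define A where "A j = {\<omega>. Xcount n j \<omega> = r}" for j
  define F where "F \<omega> = (\<Sum>j. indicator (A j) \<omega> :: ennreal)" for \<omega>
  have Asets: "A j \<in> sets M" for j unfolding A_def M_def by (rule prob_X(1)[OF p01])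
  have Aem: "emeasure M (A j) = ennreal (b j)" for j unfolding A_def M_def b_def by (rule prob_X(2)[OF p01])
  have b0: "0 \<le> b j" for j using p01[of j] by (simp add: b_def)
  have bsum: "summable b"
  proof (rule summable_comparison_test'[where N=0])
    show "summable (\<lambda>j. real (n choose r) * p j)" by (intro summable_mult sp)
    fix j
    have pj: "0 \<le> p j" "p j \<le> 1" using p01[of j] by auto
    have "p j ^ r \<le> p j ^ 1" using pj r by (intro power_decreasing) auto
    moreover have "(1 - p j) ^ (n - r) \<le> 1" using pj by (intro power_le_one) auto
    ultimately have "p j ^ r * (1 - p j)^(n-r) \<le> p j * 1"
      using pj by (intro mult_mono) auto
    then show "norm (b j) \<le> real (n choose r) * p j"
      using b0[of j] by (simp add: b_def mult.assoc mult_left_mono)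
  qed
  have Fmeas: "F \<in> borel_measurable M"
    unfolding F_def[abs_def] using Asets by measurable
  have nnF: "(\<integral>\<^sup>+\<omega>. F \<omega> \<partial>M) = ennreal (\<Sum>j. b j)"
  proof -
    have "(\<integral>\<^sup>+\<omega>. F \<omega> \<partial>M) = (\<Sum>j. \<integral>\<^sup>+\<omega>. indicator (A j) \<omega> \<partial>M)"
      unfolding F_def using Asets by (intro nn_integral_suminf) simp
    also have "\<dots> = (\<Sum>j. ennreal (b j))" using Asets Aem by simp
    also have "\<dots> = ennreal (\<Sum>j. b j)" using b0 bsum by (rule suminf_ennreal2)
    finally show ?thesis .
  qed
  have Kc: "real (Kcount n r \<omega>) = enn2real (F \<omega>)" for \<omega>
  proof -
    have "F \<omega> = (\<Sum>j. indicator {j. Xcount n j \<omega> = r} j :: ennreal)"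
      unfolding F_def A_def by (simp add: indicator_def)
    also have "\<dots> = (if finite {j. Xcount n j \<omega> = r} then of_nat (card {j. Xcount n j \<omega> = r}) else \<infinity>)"
      by (rule suminf_indicator_card)
    finally show ?thesis by (simp add: Kcount_def)
  qed
  have "EK p n r = (\<integral>\<omega>. enn2real (F \<omega>) \<partial>M)"
    unfolding EK_def M_def Kc ..
  also have "\<dots> = enn2real (\<integral>\<^sup>+\<omega>. ennreal (enn2real (F \<omega>)) \<partial>M)"
    using Fmeas by (intro integral_eq_nn_integral) auto
  also have "(\<integral>\<^sup>+\<omega>. ennreal (enn2real (F \<omega>)) \<partial>M) = (\<integral>\<^sup>+\<omega>. F \<omega> \<partial>M)"
  proof (rule nn_integral_cong_AE)
    have "AE \<omega> in M. F \<omega> \<noteq> \<infinity>" using Fmeas by (rule nn_integral_PInf_AE) (simp add: nnF)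
    then show "AE \<omega> in M. ennreal (enn2real (F \<omega>)) = F \<omega>"
      by eventually_elim (simp add: less_top)
  qed
  also have "\<dots> = ennreal (\<Sum>j. b j)" by (rule nnF)
  finally have "EK p n r = (\<Sum>j. b j)" using suminf_nonneg[OF bsum b0] by simp
  then have "b sums EK p n r" using summable_sums[OF bsum] by simp
  then show ?thesis unfolding b_def[abs_def] .
qed

theorem theorem2:
  fixes p :: "nat \<Rightarrow> real" and \<alpha> :: real and L :: "real \<Rightarrow> real" and r :: nat
  assumes "\<And>j. 0 \<le> p j \<and> p j \<le> 1"
    and "summable p"
    and "0 < \<alpha>" and "\<alpha> < 1"
    and "regularly_varying p \<alpha> L"
    and "r \<ge> 1"
  shows "(\<lambda>n. EK p n r) \<sim>[at_top]
           (\<lambda>n. \<alpha> * Gamma (real r - \<alpha>) / fact r * real n powr \<alpha> * L (real n))"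
proof -
  note p01 = assms(1) and sp = assms(2) and \<alpha> = assms(3,4) and rv = assms(5) and r = assms(6)
  define c where "c = \<alpha> * Gamma (real r - \<alpha>) / fact r"
  have "Gamma (real r - \<alpha>) > 0" using \<alpha> r by (intro Gamma_real_pos) simp
  then have c0: "c \<noteq> 0" using \<alpha> by (simp add: c_def)
  define I where "I n = (\<integral>t. indicator {0<..} t * hh r n t * nubar p (t / real n) \<partial>lborel)" for n
  have lim: "(\<lambda>n. I n / nubar p (1 / real n)) \<longlonglongrightarrow> c"
    unfolding I_def c_def by (rule main_limit[OF p01 sp \<alpha> rv r])
  have ev: "eventually (\<lambda>n. I n / nubar p (1 / real n) = EK p n r / nubar p (1 / real n)) sequentially"
    using eventually_gt_at_top[of r]
  proof eventually_elim
    case (elim n)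
    have "I n = EK p n r"
      unfolding I_def by (rule sums_unique2[OF abel[OF p01 sp r elim] EK_sums[OF p01 sp r]])
    then show ?case by simp
  qed
  have lim2: "(\<lambda>n. EK p n r / nubar p (1 / real n)) \<longlonglongrightarrow> c"
    by (rule Lim_transform_eventually[OF lim ev])
  have e1: "(\<lambda>n. EK p n r) \<sim>[sequentially] (\<lambda>n. c * nubar p (1 / real n))"
    by (rule asymp_equivI'_const[OF lim2 c0])
  have e2: "(\<lambda>n. c * nubar p (1 / real n)) \<sim>[sequentially] (\<lambda>n. c * (real n powr \<alpha> * L (real n)))"
    by (rule asymp_equiv_mult[OF asymp_equiv_refl rv_main_equiv[OF rv]])
  have "(\<lambda>n. EK p n r) \<sim>[sequentially] (\<lambda>n. c * (real n powr \<alpha> * L (real n)))"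
    by (rule asymp_equiv_trans[OF e1 e2])
  moreover have "(\<lambda>n. c * (real n powr \<alpha> * L (real n))) =
      (\<lambda>n. \<alpha> * Gamma (real r - \<alpha>) / fact r * real n powr \<alpha> * L (real n))"
    by (simp add: c_def mult.assoc)
  ultimately show ?thesis by simp
qed

end
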